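(* Let $n\ge3$ and let $p$ be a permutation pattern whose longest decreasing subsequence has length at least $4$. Then the coefficient sequence $(a_i)$ of $F_{p,n}(x)$ is unbounded.
   Context: An affine permutation of size $n$ is a bijection $w:\mathbb{Z}\to\mathbb{Z}$ with $w(i+n)=w(i)+n$ for all $i$ and $w(1)+\cdots+w(n)=\binom{n+1}{2}$; $\widetilde{S}_n$ is the group of these, generated by $s_0,\dots,s_{n-1}$ where $ws_i$ swaps the values at positions $i+mn$ and $i+1+mn$ for all $m\in\mathbb{Z}$; $\ell(w)$ is the minimal number of generators in a factorization. For $p\in S_k$, $w$ contains $p$ if there exist integers $i_1<\cdots<i_k$ with $w(i_1),\dots,w(i_k)$ in the same relative order as $p_1,\dots,p_k$; otherwise $w$ avoids $p$. $F_{p,n}(x)=\sum_{w\in\widetilde{S}_n,\,w\text{ avoids }p}x^{\ell(w)}=\sum_i a_ix^i$. *)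

theory Defs
  imports Main "HOL-Library.Sublist"
begin

definition affine_perm :: "nat \<Rightarrow> (int \<Rightarrow> int) \<Rightarrow> bool" where
  "affine_perm n w \<longleftrightarrow> bij w \<and> (\<forall>i. w (i + int n) = w i + int n)
     \<and> (\<Sum>i=1..int n. w i) = int ((n + 1) * n div 2)"

text \<open>The generator s_i (0 \<le> i < n) as a map on positions: it swaps
  i+mn and i+1+mn for every m. Right multiplication w s_i is w \<circ> s_i.\<close>
definition affine_gen :: "nat \<Rightarrow> nat \<Rightarrow> int \<Rightarrow> int" where
  "affine_gen n i j =
     (if j mod int n = int i mod int n then j + 1
      else if j mod int n = (int i + 1) mod int n then j - 1
      else j)"

definition gen_prod :: "nat \<Rightarrow> nat list \<Rightarrow> int \<Rightarrow> int" where
  "gen_prod n is = foldr (\<lambda>i f. affine_gen n i \<circ> f) is id"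

definition affine_length :: "nat \<Rightarrow> (int \<Rightarrow> int) \<Rightarrow> nat" where
  "affine_length n w =
     (LEAST k. \<exists>is. length is = k \<and> (\<forall>i\<in>set is. i < n) \<and> w = gen_prod n is)"

definition is_pattern :: "nat list \<Rightarrow> bool" where
  "is_pattern p \<longleftrightarrow> distinct p \<and> set p = {1..length p}"

definition contains :: "(int \<Rightarrow> int) \<Rightarrow> nat list \<Rightarrow> bool" where
  "contains w p \<longleftrightarrow> (\<exists>idx :: nat \<Rightarrow> int.
      (\<forall>a b. a < b \<longrightarrow> b < length p \<longrightarrow> idx a < idx b) \<and>
      (\<forall>a<length p. \<forall>b<length p. (w (idx a) < w (idx b)) \<longleftrightarrow> (p ! a < p ! b)))"

definition avoids :: "(int \<Rightarrow> int) \<Rightarrow> nat list \<Rightarrow> bool" where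
  "avoids w p \<longleftrightarrow> \<not> contains w p"

definition longest_dec :: "nat list \<Rightarrow> nat" where
  "longest_dec p = Max {length q | q. subseq q p \<and> sorted_wrt (>) q}"

text \<open>a_i: the coefficient of x^i in F_{p,n}(x).\<close>
definition avoid_coeff :: "nat list \<Rightarrow> nat \<Rightarrow> nat \<Rightarrow> nat" where
  "avoid_coeff p n i =
     card {w. affine_perm n w \<and> avoids w p \<and> affine_length n w = i}"

end

theory Submission
  imports Defs
begin


lemma subseq_idx:
  assumes "subseq q p"
  shows "\<exists>f. (\<forall>a b. a<b \<longrightarrow> b<length q \<longrightarrow> f a < f b) \<and> (\<forall>a<length q. f a < length p \<and> q!a = p!(f a))"
  using assms
proof (induction rule: list_emb.induct)
  case (list_emb_Nil ys)
  then show ?case by auto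
next
  case (list_emb_Cons xs ys y)
  then obtain f where f: "\<forall>a b. a<b \<longrightarrow> b<length xs \<longrightarrow> f a < f b" "\<forall>a<length xs. f a < length ys \<and> xs!a = ys!(f a)" by blast
  show ?case by (rule exI[of _ "Suc \<circ> f"]) (use f in auto)
next
  case (list_emb_Cons2 x y xs ys)
  then obtain f where f: "\<forall>a b. a<b \<longrightarrow> b<length xs \<longrightarrow> f a < f b" "\<forall>a<length xs. f a < length ys \<and> xs!a = ys!(f a)" by blast
  let ?g = "\<lambda>a. case a of 0 \<Rightarrow> 0 | Suc a \<Rightarrow> Suc (f a)"
  have 1: "\<forall>a b. a<b \<longrightarrow> b<length (x#xs) \<longrightarrow> ?g a < ?g b"
  proof (intro allI impI)
    fix a b assume "a<b" "b < length (x#xs)"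
    then show "?g a < ?g b" using f(1) by (cases a; cases b) auto
  qed
  have 2: "\<forall>a<length (x#xs). ?g a < length (y#ys) \<and> (x#xs)!a = (y#ys)!(?g a)"
  proof (intro allI impI)
    fix a assume "a < length (x#xs)"
    then show "?g a < length (y#ys) \<and> (x#xs)!a = (y#ys)!(?g a)" using f(2) list_emb_Cons2.hyps(1) by (cases a) auto
  qed
  show ?case using 1 2 by blast
qed

lemma dec4:
  assumes "longest_dec p \<ge> 4"
  shows "\<exists>f::nat\<Rightarrow>nat. (\<forall>a b. a<b \<longrightarrow> b<4 \<longrightarrow> f a < f b \<and> p!(f a) > p!(f b)) \<and> (\<forall>a<4. f a < length p)"
proof -
  let ?S = "{length q | q. subseq q p \<and> sorted_wrt (>) q}"
  have fin: "finite ?S"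
    by (rule finite_subset[of _ "{..length p}"]) (auto dest: list_emb_length)
  have ne: "?S \<noteq> {}" by (auto intro: exI[of _ "[]"])
  have "Max ?S \<in> ?S" using fin ne by (rule Max_in)
  then obtain q where q: "subseq q p" "sorted_wrt (>) q" "length q = longest_dec p"
    unfolding longest_dec_def by auto
  obtain f where f: "\<forall>a b. a<b \<longrightarrow> b<length q \<longrightarrow> f a < f b" "\<forall>a<length q. f a < length p \<and> q!a = p!(f a)"
    using subseq_idx[OF q(1)] by blast
  have A: "f a < f b \<and> p!(f a) > p!(f b)" if "a<b" "b<4" for a b
  proof -
    have "b < length q" using \<open>b<4\<close> q(3) assms by linarith
    moreover have "q!a > q!b" using sorted_wrt_nth_less[OF q(2) \<open>a<b\<close> \<open>b < length q\<close>] by simp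
    ultimately show ?thesis using f \<open>a<b\<close> by (metis order.strict_trans)
  qed
  have B: "f a < length p" if "a<4" for a using f q assms that by auto
  show ?thesis using A B by blast
qed



lemma gen_prod_Nil[simp]: "gen_prod n [] = id" by (simp add: gen_prod_def)
lemma gen_prod_Cons[simp]: "gen_prod n (i#is) = affine_gen n i \<circ> gen_prod n is"
  by (simp add: gen_prod_def)
lemma gen_prod_append: "gen_prod n (a@b) = gen_prod n a \<circ> gen_prod n b"
  by (induction a) auto

lemma mod_small: "(0::int) \<le> x \<Longrightarrow> x < 2*m \<Longrightarrow> x mod m = (if x < m then x else x - m)"
proof -
  assume a: "0 \<le> x" "x < 2*m"
  show ?thesis
  proof (cases "x < m")
    case True then show ?thesis using a by simp
  next
    case False
    have "x mod m = (x - m) mod m" using False a by (intro mod_pos_geq) auto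
    also have "\<dots> = x - m" by (rule mod_pos_pos_trivial) (use False a in auto)
    finally have "x mod m = x - m" .
    then show ?thesis using False by simp
  qed
qed

definition Pf :: "nat \<Rightarrow> nat \<Rightarrow> int \<Rightarrow> int" where
  "Pf n k j = (if j mod int n \<noteq> 0 \<and> j mod int n < int k then j
     else if j mod int n = 0 then j - (int n - int k) else j + 1)"

lemma P_step:
  assumes "1 \<le> k" "k < n"
  shows "affine_gen n k (Pf n (Suc k) j) = Pf n k j"
proof -
  define r where "r = j mod int n"
  have n0: "int n > 0" using assms by simp
  have r: "0 \<le> r" "r < int n" using n0 by (simp_all add: r_def)
  have kk: "int k mod int n = int k" using assms by simp
  have k1: "(int k + 1) mod int n = (if int k + 1 < int n then int k + 1 else 0)"
    using mod_small[of "int k + 1" "int n"] assms by auto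
  have j1: "(j + 1) mod int n = (if r + 1 < int n then r + 1 else 0)"
    proof -
    have "(j+1) mod int n = (r+1) mod int n" unfolding r_def by (simp add: mod_add_left_eq)
    then show ?thesis using mod_small[of "r + 1" "int n"] r by simp
  qed
  have j2: "r = 0 \<Longrightarrow> (j - (int n - (int k + 1))) mod int n = (int k + 1) mod int n"
  proof -
    assume "r = 0"
    then have "(j - (int n - (int k + 1))) mod int n = (0 - (int n - (int k + 1))) mod int n"
      by (metis mod_diff_left_eq r_def)
    also have "\<dots> = (int k + 1 + (-1) * int n) mod int n" by simp
    also have "\<dots> = (int k + 1) mod int n" by (rule mod_mult_self1)
    finally show ?thesis .
  qed
  have ag: "affine_gen n k x = (if x mod int n = int k then x + 1 else if x mod int n = (int k + 1) mod int n then x - 1 else x)" for x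
    unfolding affine_gen_def using kk by simp
  consider (a) "r \<noteq> 0" "r < int k" | (b) "r = int k" | (c) "r \<noteq> 0" "r > int k" | (d) "r = 0"
    by linarith
  then show ?thesis
  proof cases
    case a
    then have "Pf n (Suc k) j = j" "Pf n k j = j" by (simp_all add: Pf_def r_def[symmetric])
    then show ?thesis using a k1 assms by (simp add: ag r_def[symmetric])
  next
    case b
    then have "Pf n (Suc k) j = j" "Pf n k j = j + 1" using assms by (simp_all add: Pf_def r_def[symmetric])
    then show ?thesis using b k1 assms by (simp add: ag r_def[symmetric])
  next
    case c
    then have "Pf n (Suc k) j = j + 1" "Pf n k j = j + 1" by (simp_all add: Pf_def r_def[symmetric])
    then show ?thesis using c k1 j1 r assms by (simp add: ag r_def[symmetric])
  next
    case d
    then have "Pf n (Suc k) j = j - (int n - (int k + 1))" "Pf n k j = j - (int n - int k)" by (simp_all add: Pf_def r_def[symmetric])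
    then show ?thesis using d k1 j2 r assms by (simp add: ag r_def[symmetric])
  qed
qed

lemma P_formula:
  assumes "1 \<le> k" "k \<le> n"
  shows "gen_prod n [k..<n] = Pf n k"
  using assms
proof (induction "n - k" arbitrary: k)
  case 0
  then have "k = n" by simp
  moreover have "int n > 0" using 0 by simp
  ultimately show ?case using pos_mod_bound[of "int n"] by (auto simp: Pf_def fun_eq_iff)
next
  case (Suc d)
  then have "k < n" by simp
  then have "[k..<n] = k # [Suc k..<n]" by (simp add: upt_conv_Cons)
  moreover have "gen_prod n [Suc k..<n] = Pf n (Suc k)" using Suc by simp
  ultimately show ?case using P_step[OF Suc(3) \<open>k<n\<close>] by (auto simp: fun_eq_iff)
qed

definition cA :: "nat \<Rightarrow> int \<Rightarrow> int" where
  "cA n j = (if j mod int n = 0 then j - int n else if j mod int n = int n - 1 then j + 2 else j + 1)"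

lemma cA_formula:
  assumes "n \<ge> 3"
  shows "gen_prod n [0..<n] = cA n"
proof -
  have "[0..<n] = 0 # [1..<n]" using assms by (simp add: upt_conv_Cons)
  then have e: "gen_prod n [0..<n] = affine_gen n 0 \<circ> Pf n 1" using P_formula[of 1 n] assms by simp
  have "affine_gen n 0 (Pf n 1 j) = cA n j" for j
  proof -
    define r where "r = j mod int n"
    have n0: "int n > 0" using assms by simp
    have r: "0 \<le> r" "r < int n" using n0 by (simp_all add: r_def)
    have j1: "(j + 1) mod int n = (if r + 1 < int n then r + 1 else 0)"
      proof -
    have "(j+1) mod int n = (r+1) mod int n" unfolding r_def by (simp add: mod_add_left_eq)
    then show ?thesis using mod_small[of "r + 1" "int n"] r by simp
  qed
    have j2: "r = 0 \<Longrightarrow> (j - (int n - 1)) mod int n = 1"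
    proof -
      assume "r = 0"
      then have "(j - (int n - 1)) mod int n = (0 - (int n - 1)) mod int n"
        by (metis mod_diff_left_eq r_def)
      also have "\<dots> = (1 + (-1) * int n) mod int n" by simp
      also have "\<dots> = 1 mod int n" by (rule mod_mult_self1)
      finally show ?thesis using assms by simp
    qed
    have o: "1 mod int n = 1" using assms by simp
    have ag: "affine_gen n 0 x = (if x mod int n = 0 then x + 1 else if x mod int n = 1 then x - 1 else x)" for x
      unfolding affine_gen_def using o by simp
    consider (a) "r \<noteq> 0" "r < int n - 1" | (b) "r = int n - 1" | (d) "r = 0"
      using r by linarith
    then show ?thesis
    proof cases
      case a
      then have "Pf n 1 j = j + 1" "cA n j = j + 1" using r by (simp_all add: Pf_def cA_def r_def[symmetric])
      then show ?thesis using a j1 r assms by (simp add: ag r_def[symmetric])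
    next
      case b
      then have "Pf n 1 j = j + 1" "cA n j = j + 2" using assms by (simp_all add: Pf_def cA_def r_def[symmetric])
      then show ?thesis using b j1 r assms by (simp add: ag r_def[symmetric])
    next
      case d
      then have "Pf n 1 j = j - (int n - 1)" "cA n j = j - int n" by (simp_all add: Pf_def cA_def r_def[symmetric])
      then show ?thesis using d j2 r assms by (simp add: ag r_def[symmetric])
    qed
  qed
  then show ?thesis using e by auto
qed



lemma dm: "(0::int) < m \<Longrightarrow> 0 \<le> s \<Longrightarrow> s < m \<Longrightarrow> (m*q + s) div m = q \<and> (m*q+s) mod m = s"
  by (simp add: add.commute)

definition idx :: "nat \<Rightarrow> int \<Rightarrow> int" where
  "idx n x = (x div int n) * (int n - 1) + x mod int n - 1"

lemma cA_step:
  assumes "n \<ge> 3" "x mod int n \<noteq> 0"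
  shows "cA n x mod int n \<noteq> 0 \<and> idx n (cA n x) = idx n x + 1"
proof -
  define q r where "q = x div int n" and "r = x mod int n"
  have n0: "int n > 0" using assms by simp
  have "0 \<le> r" using n0 by (simp add: r_def)
  moreover have "r \<noteq> 0" "r < int n" using n0 assms(2) by (simp_all add: r_def)
  ultimately have r: "0 < r" "r < int n" by linarith+
  have x: "x = int n * q + r" by (simp add: q_def r_def)
  have cx: "cA n x = (if r = 0 then x - int n else if r = int n - 1 then x + 2 else x + 1)"
    by (simp add: cA_def r_def)
  show ?thesis
  proof (cases "r = int n - 1")
    case True
    then have c: "cA n x = int n * (q+1) + 1" unfolding cx using r by (subst x) (simp add: algebra_simps)
    have "cA n x div int n = q + 1 \<and> cA n x mod int n = 1" unfolding c using n0 assms by (intro dm) auto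
    then show ?thesis unfolding idx_def q_def[symmetric] r_def[symmetric] using True by (simp add: algebra_simps)
  next
    case False
    then have c: "cA n x = int n * q + (r + 1)" unfolding cx using r by (subst x) (simp add: algebra_simps)
    have "cA n x div int n = q \<and> cA n x mod int n = r + 1" unfolding c using n0 r False by (intro dm) auto
    then show ?thesis unfolding idx_def q_def[symmetric] r_def[symmetric] using r by (simp add: algebra_simps)
  qed
qed

lemma cA_pow_nz:
  assumes "n \<ge> 3" "x mod int n \<noteq> 0"
  shows "(cA n ^^ k) x mod int n \<noteq> 0 \<and> idx n ((cA n ^^ k) x) = idx n x + int k"
proof (induction k)
  case 0 then show ?case using assms by simp
next
  case (Suc k) then show ?case using cA_step[OF assms(1), of "(cA n ^^ k) x"] by simp
qed

lemma idx_inj: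
  assumes "n \<ge> 3" "x mod int n \<noteq> 0" "y mod int n \<noteq> 0" "idx n x = idx n y"
  shows "x = y"
proof -
  have n0: "int n - 1 > 0" using assms by simp
  have "0 \<le> x mod int n" "x mod int n < int n" "0 \<le> y mod int n" "y mod int n < int n" using assms(1) by simp_all
  then have rx: "0 \<le> x mod int n - 1" "x mod int n - 1 < int n - 1"
    and ry: "0 \<le> y mod int n - 1" "y mod int n - 1 < int n - 1"
    using assms(2,3) by linarith+
  have ex: "idx n x = (int n - 1) * (x div int n) + (x mod int n - 1)" by (simp add: idx_def algebra_simps)
  have ey: "idx n y = (int n - 1) * (y div int n) + (y mod int n - 1)" by (simp add: idx_def algebra_simps)
  have x1: "x div int n = idx n x div (int n - 1)" "x mod int n - 1 = idx n x mod (int n - 1)"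
    using dm[OF n0 rx, of "x div int n"] unfolding ex by simp_all
  have y1: "y div int n = idx n y div (int n - 1)" "y mod int n - 1 = idx n y mod (int n - 1)"
    using dm[OF n0 ry, of "y div int n"] unfolding ey by simp_all
  have "x = int n * (x div int n) + x mod int n" "y = int n * (y div int n) + y mod int n" by simp_all
  then show ?thesis using x1 y1 assms(4) by (metis diff_add_cancel)
qed

definition aa :: "nat \<Rightarrow> int \<Rightarrow> int" where "aa n r = (if r = 0 then -(int n - 1) else 1)"
definition bb :: "nat \<Rightarrow> int \<Rightarrow> int" where "bb n r = (if r = 1 then -(int n - 1) else 1)"
definition tr :: "nat \<Rightarrow> (int \<Rightarrow> int) \<Rightarrow> int \<Rightarrow> int" where "tr n c j = j + int n * c (j mod int n)"

lemma cA_pow_zero: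
  assumes "n \<ge> 3" "x mod int n = 0"
  shows "(cA n ^^ k) x = x - int k * int n"
proof (induction k)
  case 0 then show ?case by simp
next
  case (Suc k)
  have h: "(x - int k * int n) mod int n = 0" using assms(2) by (simp add: mod_diff_eq[symmetric])
  have "(cA n ^^ Suc k) x = cA n (x - int k * int n)" using Suc by simp
  also have "\<dots> = x - int k * int n - int n" using h by (simp add: cA_def)
  finally show ?case by (simp add: algebra_simps)
qed

lemma cA_pow:
  assumes "n \<ge> 3"
  shows "cA n ^^ (n-1) = tr n (aa n)"
proof
  fix x
  show "(cA n ^^ (n-1)) x = tr n (aa n) x"
  proof (cases "x mod int n = 0")
    case True then show ?thesis using cA_pow_zero[OF assms True, of "n-1"] assms
      by (simp add: tr_def aa_def of_nat_diff algebra_simps)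
  next
    case False
    have m: "(x + int n) mod int n = x mod int n" by simp
    have d: "(x + int n) div int n = x div int n + 1" using assms by (simp add: div_add_self2)
    have "idx n (x + int n) = idx n x + int (n-1)" unfolding idx_def m d using assms
      by (simp add: of_nat_diff algebra_simps)
    then have "(cA n ^^ (n-1)) x = x + int n"
      using cA_pow_nz[OF assms False, of "n-1"] idx_inj[OF assms _ _, of "(cA n ^^ (n-1)) x" "x + int n"] False m
      by simp
    then show ?thesis using False by (simp add: tr_def aa_def)
  qed
qed



lemma ag_shift: "affine_gen n (Suc i) j = affine_gen n i (j - 1) + 1"
proof -
  have e1: "(j mod int n = int (Suc i) mod int n) = ((j-1) mod int n = int i mod int n)"
    by (simp add: mod_eq_dvd_iff algebra_simps)
  have e2: "(j mod int n = (int (Suc i) + 1) mod int n) = ((j-1) mod int n = (int i + 1) mod int n)"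
    by (simp add: mod_eq_dvd_iff algebra_simps)
  show ?thesis unfolding affine_gen_def e1 e2 by simp
qed

lemma ag_n: "affine_gen n n = affine_gen n 0"
  by (simp add: affine_gen_def fun_eq_iff)

lemma gen_prod_shift: "gen_prod n (map Suc is) j = gen_prod n is (j - 1) + 1"
  by (induction "is" arbitrary: j) (simp_all add: ag_shift)

definition cB :: "nat \<Rightarrow> int \<Rightarrow> int" where "cB n j = cA n (j - 1) + 1"

lemma cB_formula:
  assumes "n \<ge> 3"
  shows "gen_prod n ([1..<n] @ [0]) = cB n"
proof -
  have "map Suc [0..<n] = [1..<n] @ [n]" using assms by (simp add: map_Suc_upt upt_Suc_append)
  then have "gen_prod n ([1..<n] @ [n]) j = cB n j" for j
    using gen_prod_shift[of n "[0..<n]" j] cA_formula[OF assms] by (simp add: cB_def)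
  moreover have "gen_prod n ([1..<n] @ [n]) = gen_prod n ([1..<n] @ [0])"
    by (simp add: gen_prod_append ag_n)
  ultimately show ?thesis by auto
qed

lemma cB_pow: "(cB n ^^ k) j = (cA n ^^ k) (j - 1) + 1"
  by (induction k arbitrary: j) (simp_all add: cB_def)

lemma cB_pow_tr:
  assumes "n \<ge> 3"
  shows "cB n ^^ (n-1) = tr n (bb n)"
proof
  fix j
  have "(j - 1) mod int n = 0 \<longleftrightarrow> j mod int n = 1"
  proof -
    have "(j - 1) mod int n = 0 \<longleftrightarrow> (j - 1) mod int n = 0 mod int n" by simp
    also have "\<dots> \<longleftrightarrow> j mod int n = 1 mod int n"
      using mod_eq_dvd_iff[of "j-1" "int n" 0] mod_eq_dvd_iff[of j "int n" 1] by simp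
    also have "\<dots> \<longleftrightarrow> j mod int n = 1" using assms by simp
    finally show ?thesis .
  qed
  moreover have "(j - 1) mod int n = ((j mod int n) - 1) mod int n" by (simp add: mod_diff_left_eq)
  ultimately show "(cB n ^^ (n-1)) j = tr n (bb n) j"
    unfolding cB_pow cA_pow[OF assms] by (simp add: tr_def aa_def bb_def)
qed

lemma gen_prod_rep: "gen_prod n (concat (replicate k w)) = gen_prod n w ^^ k"
  by (induction k) (simp_all add: gen_prod_append)

lemma tr_comp: "tr n c (tr n d j) = tr n (\<lambda>r. c r + d r) j"
  by (simp add: tr_def algebra_simps)

lemma tr_pow: "tr n c ^^ k = tr n (\<lambda>r. int k * c r)"
proof (induction k)
  case 0 then show ?case by (simp add: tr_def fun_eq_iff)
next
  case (Suc k) then show ?case by (simp add: fun_eq_iff tr_comp algebra_simps)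
qed

definition Lw :: "nat \<Rightarrow> nat \<Rightarrow> nat \<Rightarrow> nat list" where
  "Lw n u v = concat (replicate ((n-1)*u) [0..<n]) @ concat (replicate ((n-1)*v) ([1..<n] @ [0]))"

definition Wf :: "nat \<Rightarrow> nat \<Rightarrow> nat \<Rightarrow> int \<Rightarrow> int" where
  "Wf n u v = tr n (\<lambda>r. int u * aa n r + int v * bb n r)"

lemma Lw_gen:
  assumes "n \<ge> 3"
  shows "gen_prod n (Lw n u v) = Wf n u v"
proof -
  have "gen_prod n (Lw n u v) = gen_prod n (concat (replicate ((n-1)*u) [0..<n])) \<circ> gen_prod n (concat (replicate ((n-1)*v) ([1..<n] @ [0])))"
    unfolding Lw_def by (rule gen_prod_append)
  also have "\<dots> = (cA n ^^ (n-1)) ^^ u \<circ> (cB n ^^ (n-1)) ^^ v"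
    unfolding gen_prod_rep cA_formula[OF assms] cB_formula[OF assms]
    by (simp add: funpow_mult mult.commute)
  also have "\<dots> = Wf n u v"
    unfolding cA_pow[OF assms] cB_pow_tr[OF assms] tr_pow Wf_def by (simp add: fun_eq_iff tr_comp)
  finally show ?thesis .
qed

lemma Lw_len: "n \<ge> 3 \<Longrightarrow> length (Lw n u v) = (n-1)*u*n + (n-1)*v*n"
  by (cases n) (simp_all add: Lw_def length_concat sum_list_replicate algebra_simps)

lemma Lw_set: "n \<ge> 3 \<Longrightarrow> \<forall>i\<in>set (Lw n u v). i < n"
  by (auto simp: Lw_def)



lemma tr_bij: "bij (tr n c)"
proof (rule o_bij[of "tr n (\<lambda>r. - c r)"])
  show "tr n (\<lambda>r. - c r) \<circ> tr n c = id" by (rule ext) (simp only: comp_def tr_comp, simp add: tr_def)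
  show "tr n c \<circ> tr n (\<lambda>r. - c r) = id" by (rule ext) (simp only: comp_def tr_comp, simp add: tr_def)
qed

lemma sum_id_int: "2 * (\<Sum>i=1..int n. i) = int n * (int n + 1)"
proof (induction n)
  case 0 then show ?case by simp
next
  case (Suc n)
  have "{1..int (Suc n)} = insert (int n + 1) {1..int n}" by auto
  then have "(\<Sum>i=1..int (Suc n). i) = (int n + 1) + (\<Sum>i=1..int n. i)" by simp
  then show ?case using Suc by (simp add: algebra_simps)
qed

lemma sum_id_int': "(\<Sum>i=1..int n. i) = int ((n + 1) * n div 2)"
proof -
  have "even ((n+1)*n)" by simp
  then have "int ((n + 1) * n div 2) * 2 = int ((n+1)*n)" by (metis dvd_div_mult_self of_nat_mult of_nat_numeral)
  then show ?thesis using sum_id_int[of n] by (simp add: algebra_simps)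
qed

lemma sum_aa: "n \<ge> 3 \<Longrightarrow> (\<Sum>i=1..int n. aa n (i mod int n)) = 0"
proof -
  assume n: "n \<ge> 3"
  have "{1..int n} = insert (int n) {1..int n - 1}" using n by auto
  moreover have "\<forall>i\<in>{1..int n - 1}. aa n (i mod int n) = 1" by (auto simp: aa_def)
  ultimately have "(\<Sum>i=1..int n. aa n (i mod int n)) = aa n 0 + (\<Sum>i\<in>{1..int n - 1}. 1)" by simp
  then show ?thesis using n by (simp add: aa_def)
qed

lemma sum_bb: "n \<ge> 3 \<Longrightarrow> (\<Sum>i=1..int n. bb n (i mod int n)) = 0"
proof -
  assume n: "n \<ge> 3"
  have "{1..int n} = insert 1 {2..int n}" using n by auto
  moreover have "bb n (i mod int n) = 1" if "i \<in> {2..int n}" for i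
  proof (cases "i = int n")
    case True then show ?thesis using n by (simp add: bb_def)
  next
    case False then show ?thesis using that by (simp add: bb_def)
  qed
  ultimately have "(\<Sum>i=1..int n. bb n (i mod int n)) = bb n 1 + (\<Sum>i\<in>{2..int n}. 1)" using n by simp
  then show ?thesis using n by (simp add: bb_def)
qed

lemma Wf_affine: assumes "n \<ge> 3" shows "affine_perm n (Wf n u v)"
proof -
  define X where "X i = int u * aa n (i mod int n) + int v * bb n (i mod int n)" for i
  have z: "(\<Sum>i=1..int n. X i) = 0"
    by (simp add: X_def sum.distrib sum_distrib_left[symmetric] sum_aa[OF assms] sum_bb[OF assms])
  have "(\<Sum>i=1..int n. Wf n u v i) = (\<Sum>i=1..int n. i + int n * X i)" by (simp add: Wf_def tr_def X_def)
  also have "\<dots> = (\<Sum>i=1..int n. i) + (\<Sum>i=1..int n. int n * X i)" by (rule sum.distrib)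
  also have "\<dots> = (\<Sum>i=1..int n. i)" by (simp add: sum_distrib_left[symmetric] z)
  finally have s: "(\<Sum>i=1..int n. Wf n u v i) = (\<Sum>i=1..int n. i)" .
  have p: "Wf n u v (i + int n) = Wf n u v i + int n" for i by (simp add: Wf_def tr_def)
  show ?thesis unfolding affine_perm_def
    using tr_bij[of n] s sum_id_int' p unfolding Wf_def by simp
qed

lemma four_lt3: "(a::nat) < 3 \<Longrightarrow> b < 3 \<Longrightarrow> c < 3 \<Longrightarrow> d < 3 \<Longrightarrow> a=b \<or> a=c \<or> a=d \<or> b=c \<or> b=d \<or> c=d"
  by (simp add: less_Suc_eq numeral_3_eq_3) blast

lemma avoid_gen:
  assumes "longest_dec p \<ge> 4" "\<forall>x y. x<y \<longrightarrow> G x = G y \<longrightarrow> w x < w y" "\<forall>x. G x < (3::nat)"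
  shows "avoids w p"
  unfolding avoids_def contains_def
proof
  assume "\<exists>idx :: nat \<Rightarrow> int. (\<forall>a b. a < b \<longrightarrow> b < length p \<longrightarrow> idx a < idx b) \<and>
      (\<forall>a<length p. \<forall>b<length p. (w (idx a) < w (idx b)) \<longleftrightarrow> (p ! a < p ! b))"
  then obtain idx :: "nat \<Rightarrow> int" where i1: "\<forall>a b. a < b \<longrightarrow> b < length p \<longrightarrow> idx a < idx b"
    and i2: "\<forall>a<length p. \<forall>b<length p. (w (idx a) < w (idx b)) \<longleftrightarrow> (p ! a < p ! b)" by blast
  from dec4[OF assms(1)] obtain f where f1: "\<forall>a b::nat. a<b \<longrightarrow> b<4 \<longrightarrow> f a < f b \<and> p!(f a) > p!(f b)" and f2: "\<forall>a<(4::nat). f a < length p"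
    by (elim exE conjE)
  have key: "G (idx (f a)) \<noteq> G (idx (f b))" if "a < b" "b < 4" for a b
  proof
    assume eq: "G (idx (f a)) = G (idx (f b))"
    have fab: "f a < f b" "p!(f a) > p!(f b)" using f1[rule_format, OF that] by simp_all
    have fl: "f b < length p" "f a < length p" using f2 that by simp_all
    have c1: "idx (f a) < idx (f b)" by (rule i1[rule_format, OF fab(1) fl(1)])
    have c2: "w (idx (f b)) < w (idx (f a))" using i2[rule_format, OF fl(1) fl(2)] fab(2) by simp
    have "w (idx (f a)) < w (idx (f b))" by (rule assms(2)[rule_format, OF c1 eq])
    then show False using c2 by simp
  qed
  have g: "\<forall>k. G (idx (f k)) < 3" using assms(3) by blast
  have "G (idx (f 0)) = G (idx (f 1)) \<or> G (idx (f 0)) = G (idx (f 2)) \<or> G (idx (f 0)) = G (idx (f 3)) \<or>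
        G (idx (f 1)) = G (idx (f 2)) \<or> G (idx (f 1)) = G (idx (f 3)) \<or> G (idx (f 2)) = G (idx (f 3))"
    by (rule four_lt3) (use g in blast)+
  then show False
    using key[of 0 1] key[of 0 2] key[of 0 3] key[of 1 2] key[of 1 3] key[of 2 3] by simp
qed

definition Gc :: "nat \<Rightarrow> int \<Rightarrow> nat" where
  "Gc n x = (if x mod int n = 0 then 0 else if x mod int n = 1 then 1 else 2)"

lemma Wf_avoids:
  assumes "longest_dec p \<ge> 4"
  shows "avoids (Wf n u v) p"
proof (rule avoid_gen[OF assms, of "Gc n"])
  show "\<forall>x. Gc n x < 3" by (simp add: Gc_def)
  show "\<forall>x y. x<y \<longrightarrow> Gc n x = Gc n y \<longrightarrow> Wf n u v x < Wf n u v y"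
  proof (intro allI impI)
    fix x y :: int assume xy: "x < y" "Gc n x = Gc n y"
    have "aa n (x mod int n) = aa n (y mod int n) \<and> bb n (x mod int n) = bb n (y mod int n)"
      using xy(2) unfolding Gc_def aa_def bb_def by (auto split: if_splits)
    then show "Wf n u v x < Wf n u v y" using xy(1) by (simp add: Wf_def tr_def)
  qed
qed



lemma ag_bound: "\<bar>affine_gen n i x - x\<bar> \<le> 1"
  by (simp add: affine_gen_def)

lemma gp_bound: "\<bar>gen_prod n is j - j\<bar> \<le> int (length is)"
proof (induction "is")
  case Nil then show ?case by simp
next
  case (Cons i "is")
  have "\<bar>affine_gen n i (gen_prod n is j) - gen_prod n is j\<bar> \<le> 1" by (rule ag_bound)
  then show ?case using Cons by simp
qed

lemma len_lower:
  assumes "\<exists>is. (\<forall>i\<in>set is. i<n) \<and> w = gen_prod n is"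
  shows "\<bar>w j - j\<bar> \<le> int (affine_length n w)"
proof -
  let ?P = "\<lambda>k. \<exists>is. length is = k \<and> (\<forall>i\<in>set is. i < n) \<and> w = gen_prod n is"
  have "\<exists>k. ?P k" using assms by blast
  then have "?P (LEAST k. ?P k)" by (rule LeastI_ex)
  then obtain xs where "length xs = affine_length n w" "w = gen_prod n xs"
    unfolding affine_length_def by blast
  then show ?thesis using gp_bound[of n xs j] by simp
qed

lemma len_upper:
  assumes "\<forall>i\<in>set is. i<n"
  shows "affine_length n (gen_prod n is) \<le> length is"
  unfolding affine_length_def by (rule Least_le) (use assms in blast)

lemma nongen:
  assumes "\<not> (\<exists>is. (\<forall>i\<in>set is. i<n) \<and> w = gen_prod n is)"
  shows "affine_length n w = (LEAST k::nat. False)"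
proof -
  have "(\<lambda>k. \<exists>is. length is = k \<and> (\<forall>i\<in>set is. i < n) \<and> w = gen_prod n is) = (\<lambda>k. False)"
    using assms by blast
  then show ?thesis unfolding affine_length_def by simp
qed

lemma level_finite:
  assumes "i \<noteq> (LEAST k::nat. False)"
  shows "finite {w. affine_perm n w \<and> avoids w p \<and> affine_length n w = i}"
proof (rule finite_subset)
  show "{w. affine_perm n w \<and> avoids w p \<and> affine_length n w = i} \<subseteq> gen_prod n ` {is. set is \<subseteq> {..<n} \<and> length is = i}"
  proof
    fix w assume w: "w \<in> {w. affine_perm n w \<and> avoids w p \<and> affine_length n w = i}"
    then have g: "\<exists>is. (\<forall>i\<in>set is. i<n) \<and> w = gen_prod n is" using nongen assms by blast
    let ?P = "\<lambda>k. \<exists>is. length is = k \<and> (\<forall>i\<in>set is. i < n) \<and> w = gen_prod n is"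
    have "\<exists>k. ?P k" using g by blast
    then have "?P (LEAST k. ?P k)" by (rule LeastI_ex)
    then obtain xs where "length xs = affine_length n w" "(\<forall>i\<in>set xs. i < n)" "w = gen_prod n xs"
      unfolding affine_length_def by blast
    then show "w \<in> gen_prod n ` {is. set is \<subseteq> {..<n} \<and> length is = i}" using w by auto
  qed
  show "finite (gen_prod n ` {is. set is \<subseteq> {..<n} \<and> length is = i})"
    by (intro finite_imageI finite_lists_length_eq) simp
qed

lemma Wf_2: "n \<ge> 3 \<Longrightarrow> Wf n u v 2 = 2 + int n * (int u + int v)"
  by (simp add: Wf_def tr_def aa_def bb_def)

lemma Wf_n: "n \<ge> 3 \<Longrightarrow> Wf n u v (int n) = int n + int n * (- (int n - 1) * int u + int v)"
  by (simp add: Wf_def tr_def aa_def bb_def algebra_simps)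

lemma Wf_inj:
  assumes "n \<ge> 3" "Wf n u v = Wf n u' v'"
  shows "u = u' \<and> v = v'"
proof -
  have e1: "int u + int v = int u' + int v'" using Wf_2[OF assms(1), of u v] Wf_2[OF assms(1), of u' v'] assms by simp
  have "int n * (- (int n - 1) * int u + int v) = int n * (- (int n - 1) * int u' + int v')"
    using Wf_n[OF assms(1), of u v] Wf_n[OF assms(1), of u' v'] assms by simp
  then have e2: "- (int n - 1) * int u + int v = - (int n - 1) * int u' + int v'" using assms(1) by simp
  then have e2': "- (int n * int u) + int u + int v = - (int n * int u') + int u' + int v'" by (simp add: algebra_simps)
  then have "int n * int u = int n * int u'" using e1 by linarith
  then have "u = u'" using assms(1) by simp
  then show ?thesis using e1 by simp
qed



lemma arith_final:
  fixes B C T K :: nat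
  assumes "K = (C*T + C + 1)*(B+1)"
  shows "(C*(T+K) + 1) * B < (K+1)*(K+1)"
proof -
  have k1: "C*B + 1 \<le> K+1" using assms by (simp add: algebra_simps)
  have k2: "C*T*B + B < C*B + K + 1" using assms by (simp add: algebra_simps)
  have "(C*(T+K) + 1) * B = C*T*B + C*K*B + B" by (simp add: algebra_simps)
  also have "\<dots> < C*B*K + C*B + K + 1" using k2 by (simp add: algebra_simps)
  also have "\<dots> = (K+1)*(C*B+1)" by (simp add: algebra_simps)
  also have "\<dots> \<le> (K+1)*(K+1)" using k1 by (rule mult_le_mono2)
  finally show ?thesis .
qed

theorem mainTheorem9:
  fixes n :: nat and p :: "nat list"
  assumes "n \<ge> 3" and "is_pattern p" and "longest_dec p \<ge> 4"
  shows "\<forall>B. \<exists>i. avoid_coeff p n i > B"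
proof (rule ccontr)
  assume "\<not> (\<forall>B. \<exists>i. avoid_coeff p n i > B)"
  then obtain B where hB: "\<forall>i. avoid_coeff p n i \<le> B" by (auto simp: not_less)
  define c0 where "c0 = (LEAST k::nat. False)"
  define T where "T = c0 + 1"
  define C where "C = 2*(n-1)*n"
  define K where "K = (C*T + C + 1)*(B+1)"
  define M where "M = C*(T+K)"
  define L where "L i = {w. affine_perm n w \<and> avoids w p \<and> affine_length n w = i}" for i
  define Q where "Q = {T..T+K} \<times> {T..T+K}"
  define FF where "FF = (\<lambda>(u,v). Wf n u v) ` Q"
  have injQ: "inj_on (\<lambda>(u,v). Wf n u v) Q"
    using Wf_inj[OF assms(1)] by (auto simp: inj_on_def)
  have cardF: "card FF = (K+1)*(K+1)"
    unfolding FF_def using card_image[OF injQ] by (simp add: Q_def card_cartesian_product)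
  have sub: "FF \<subseteq> (\<Union>i\<in>{T..M}. L i)"
  proof
    fix w assume "w \<in> FF"
    then obtain u v where uv: "(u,v) \<in> Q" "w = Wf n u v" unfolding FF_def by auto
    have g: "\<exists>is. (\<forall>i\<in>set is. i<n) \<and> w = gen_prod n is"
      using Lw_gen[OF assms(1)] Lw_set[OF assms(1)] uv(2) by metis
    have up: "affine_length n w \<le> (n-1)*u*n + (n-1)*v*n"
      using len_upper[OF Lw_set[OF assms(1)], of u v] Lw_gen[OF assms(1)] Lw_len[OF assms(1)] uv(2) by simp
    have "(n-1)*u*n + (n-1)*v*n \<le> (n-1)*(T+K)*n + (n-1)*(T+K)*n"
      using uv(1) unfolding Q_def by (intro add_mono mult_le_mono1 mult_le_mono2) auto
    then have up2: "affine_length n w \<le> M" using up unfolding M_def C_def by (simp add: algebra_simps)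
    have "\<bar>w 2 - 2\<bar> \<le> int (affine_length n w)" using len_lower[OF g] .
    moreover have "w 2 - 2 = int n * (int u + int v)" using Wf_2[OF assms(1)] uv(2) by simp
    moreover have "int T \<le> int u" using uv(1) unfolding Q_def by auto
    moreover have "int n * (int u + int v) \<ge> int u + int v"
      using mult_right_mono[of 1 "int n" "int u + int v"] assms(1) by simp
    ultimately have lo: "T \<le> affine_length n w" by linarith
    have "affine_perm n w" "avoids w p" using Wf_affine[OF assms(1)] Wf_avoids[OF assms(3)] uv(2) by auto
    then show "w \<in> (\<Union>i\<in>{T..M}. L i)" using lo up2 unfolding L_def by auto
  qed
  have finL: "finite (L i)" if "i \<in> {T..M}" for i
    unfolding L_def using level_finite that unfolding T_def c0_def by auto
  have "card FF \<le> card (\<Union>i\<in>{T..M}. L i)"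
    by (rule card_mono[OF _ sub]) (use finL in auto)
  also have "\<dots> \<le> (\<Sum>i\<in>{T..M}. card (L i))" by (rule card_UN_le) simp
  also have "\<dots> \<le> (\<Sum>i\<in>{T..M}. B)"
    by (rule sum_mono) (use hB in \<open>auto simp: avoid_coeff_def L_def\<close>)
  also have "\<dots> \<le> (M + 1) * B" by (simp add: mult_le_mono1 del: mult_Suc)
  finally have "(K+1)*(K+1) \<le> (M+1)*B" using cardF by simp
  moreover have "(M + 1) * B < (K+1)*(K+1)" using arith_final[OF K_def] unfolding M_def .
  ultimately show False by simp
qed

end
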